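(* Let $b_x,b_y,u_x,u_y,K,\beta,e$ be positive constants with $u_y>u_x$ and $b_x\geq b_y+e$, and consider the system \[ \frac{dX}{dt}=\Big[b_x\Big(1-\frac{X+Y}{K}\Big)-u_x-\beta Y\Big]X+e\Big(1-\frac{X+Y}{K}\Big)Y,\qquad \frac{dY}{dt}=\Big[b_y\Big(1-\frac{X+Y}{K}\Big)-u_y+\beta X\Big]Y . \] Let $E_0=(0,0)$, $E_1=(\bar X,0)$ with $\bar X=K(1-u_x/b_x)$, and $E^*=(X^*,Y^* )$ with \[ X^*=\frac{-B+\sqrt{B^2-4AC}}{2A},\qquad Y^*=\frac{(\beta K-b_y)X^*}{b_y}+\frac{K(b_y-u_y)}{b_y}, \] where \[ A=\frac{\beta K}{b_y^2}\{b_y(b_x-b_y-e)+\beta K(b_y+e)\}, \] \[ B=-K(b_x-u_x)+K(b_x+\beta K+e)\frac{b_y-u_y}{b_y}+2eK\frac{(\beta K-b_y)(b_y-u_y)}{b_y^2}-\frac{eK(\beta K-b_y)}{b_y}, \] \[ C=-\frac{eK^2(b_y-u_y)u_y}{b_y^2}. \] Define $V_0=\frac{b_y}{b_x}\frac{u_x}{u_y}$, $H_0=\frac{\beta}{u_y}K\left(1-\frac{u_x}{b_x}\right)$ and $R_0=V_0+H_0$. Then: (i) $E_0$ is locally asymptotically stable if $b_x<u_x$ and $b_y<u_y$; (ii) if $b_x>u_x$, then $E_1$ is locally asymptotically stable when $R_0<1$ and unstable when $R_0>1$; (iii) $E^*$ is locally asymptotically stable if $b_x>u_x$, $b_y>u_y$,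 $b_y>\beta K$ and $\frac{K}{X^*}>\frac{b_y-\beta K}{b_y-u_y}$.
   Context: $X$ and $Y$ denote densities of uninfected and infected hosts; $b_x,b_y$ are birth rates, $u_x,u_y$ death rates, $K$ carrying capacity, $\beta$ the horizontal transmission coefficient, and $e$ the rate at which infected hosts produce uninfected offspring. The paper assumes throughout that $u_y>u_x$ and $b_x\geq b_y+e$. Local asymptotic stability of an equilibrium is in the usual sense for ODEs (both eigenvalues of the Jacobian at the equilibrium have negative real part). *)

theory Defs
  imports "HOL-Analysis.Analysis"
begin

definition dXdt :: "real \<Rightarrow> real \<Rightarrow> real \<Rightarrow> real \<Rightarrow> real \<Rightarrow> real \<Rightarrow> real \<Rightarrow> real \<Rightarrow> real \<Rightarrow> real" where
  "dXdt b_x b_y u_x u_y K beta e X Y =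
     (b_x * (1 - (X + Y) / K) - u_x - beta * Y) * X + e * (1 - (X + Y) / K) * Y"

definition dYdt :: "real \<Rightarrow> real \<Rightarrow> real \<Rightarrow> real \<Rightarrow> real \<Rightarrow> real \<Rightarrow> real \<Rightarrow> real \<Rightarrow> real \<Rightarrow> real" where
  "dYdt b_x b_y u_x u_y K beta e X Y =
     (b_y * (1 - (X + Y) / K) - u_y + beta * X) * Y"

definition jac :: "(real \<Rightarrow> real \<Rightarrow> real) \<Rightarrow> (real \<Rightarrow> real \<Rightarrow> real) \<Rightarrow> real \<Rightarrow> real \<Rightarrow> real ^ 2 ^ 2" where
  "jac F G p q = (\<chi> i j.
     if i = 1 then (if j = 1 then deriv (\<lambda>x. F x q) p else deriv (\<lambda>y. F p y) q)
     else (if j = 1 then deriv (\<lambda>x. G x q) p else deriv (\<lambda>y. G p y) q))"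

definition eigenvalue2 :: "real ^ 2 ^ 2 \<Rightarrow> complex \<Rightarrow> bool" where
  "eigenvalue2 M l \<longleftrightarrow>
     (complex_of_real (M $ 1 $ 1) - l) * (complex_of_real (M $ 2 $ 2) - l)
       - complex_of_real (M $ 1 $ 2) * complex_of_real (M $ 2 $ 1) = 0"

definition is_equilibrium :: "(real \<Rightarrow> real \<Rightarrow> real) \<Rightarrow> (real \<Rightarrow> real \<Rightarrow> real) \<Rightarrow> real \<Rightarrow> real \<Rightarrow> bool" where
  "is_equilibrium F G p q \<longleftrightarrow> F p q = 0 \<and> G p q = 0"

definition loc_asym_stable :: "(real \<Rightarrow> real \<Rightarrow> real) \<Rightarrow> (real \<Rightarrow> real \<Rightarrow> real) \<Rightarrow> real \<Rightarrow> real \<Rightarrow> bool" where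
  "loc_asym_stable F G p q \<longleftrightarrow> is_equilibrium F G p q \<and>
     (\<forall>l. eigenvalue2 (jac F G p q) l \<longrightarrow> Re l < 0)"

definition unstable :: "(real \<Rightarrow> real \<Rightarrow> real) \<Rightarrow> (real \<Rightarrow> real \<Rightarrow> real) \<Rightarrow> real \<Rightarrow> real \<Rightarrow> bool" where
  "unstable F G p q \<longleftrightarrow> is_equilibrium F G p q \<and>
     (\<exists>l. eigenvalue2 (jac F G p q) l \<and> Re l > 0)"


definition coefA :: "real \<Rightarrow> real \<Rightarrow> real \<Rightarrow> real \<Rightarrow> real \<Rightarrow> real \<Rightarrow> real \<Rightarrow> real" where
  "coefA b_x b_y u_x u_y K beta e =
     beta * K / b_y\<^sup>2 * (b_y * (b_x - b_y - e) + beta * K * (b_y + e))"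

definition coefB :: "real \<Rightarrow> real \<Rightarrow> real \<Rightarrow> real \<Rightarrow> real \<Rightarrow> real \<Rightarrow> real \<Rightarrow> real" where
  "coefB b_x b_y u_x u_y K beta e =
     - K * (b_x - u_x) + K * (b_x + beta * K + e) * ((b_y - u_y) / b_y)
     + 2 * e * K * ((beta * K - b_y) * (b_y - u_y) / b_y\<^sup>2) - e * K * (beta * K - b_y) / b_y"

definition coefC :: "real \<Rightarrow> real \<Rightarrow> real \<Rightarrow> real \<Rightarrow> real \<Rightarrow> real \<Rightarrow> real \<Rightarrow> real" where
  "coefC b_x b_y u_x u_y K beta e = - (e * K\<^sup>2 * (b_y - u_y) * u_y / b_y\<^sup>2)"

definition Xstar :: "real \<Rightarrow> real \<Rightarrow> real \<Rightarrow> real \<Rightarrow> real \<Rightarrow> real \<Rightarrow> real \<Rightarrow> real" where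
  "Xstar b_x b_y u_x u_y K beta e =
     (let A = coefA b_x b_y u_x u_y K beta e; B = coefB b_x b_y u_x u_y K beta e;
          C = coefC b_x b_y u_x u_y K beta e
      in (- B + sqrt (B\<^sup>2 - 4 * A * C)) / (2 * A))"

definition Ystar :: "real \<Rightarrow> real \<Rightarrow> real \<Rightarrow> real \<Rightarrow> real \<Rightarrow> real \<Rightarrow> real \<Rightarrow> real" where
  "Ystar b_x b_y u_x u_y K beta e =
     (beta * K - b_y) * Xstar b_x b_y u_x u_y K beta e / b_y + K * (b_y - u_y) / b_y"

definition Xbar :: "real \<Rightarrow> real \<Rightarrow> real \<Rightarrow> real" where
  "Xbar b_x u_x K = K * (1 - u_x / b_x)"

definition V0 :: "real \<Rightarrow> real \<Rightarrow> real \<Rightarrow> real \<Rightarrow> real" where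
  "V0 b_x b_y u_x u_y = (b_y / b_x) * (u_x / u_y)"

definition H0 :: "real \<Rightarrow> real \<Rightarrow> real \<Rightarrow> real \<Rightarrow> real \<Rightarrow> real" where
  "H0 b_x u_x u_y K beta = (beta / u_y) * K * (1 - u_x / b_x)"

definition R0 :: "real \<Rightarrow> real \<Rightarrow> real \<Rightarrow> real \<Rightarrow> real \<Rightarrow> real \<Rightarrow> real" where
  "R0 b_x b_y u_x u_y K beta = V0 b_x b_y u_x u_y + H0 b_x u_x u_y K beta"

end

theory Submission imports Defs begin

lemma eig_tri:
  assumes "eigenvalue2 M l" "M $ 2 $ 1 = 0"
  shows "l = complex_of_real (M $ 1 $ 1) \<or> l = complex_of_real (M $ 2 $ 2)"
  using assms unfolding eigenvalue2_def by auto

lemma eig_neg: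
  assumes "eigenvalue2 M l"
    and T: "M $ 1 $ 1 + M $ 2 $ 2 < 0"
    and D: "M $ 1 $ 1 * M $ 2 $ 2 - M $ 1 $ 2 * M $ 2 $ 1 > 0"
  shows "Re l < 0"
proof -
  define a where "a = M $ 1 $ 1"
  define b where "b = M $ 1 $ 2"
  define c where "c = M $ 2 $ 1"
  define d where "d = M $ 2 $ 2"
  define x where "x = Re l"
  define y where "y = Im l"
  have eq: "(complex_of_real a - l) * (complex_of_real d - l) - complex_of_real b * complex_of_real c = 0"
    using assms(1) unfolding eigenvalue2_def a_def b_def c_def d_def .
  have re: "(a - x) * (d - x) - y * y - b * c = 0"
    using arg_cong[OF eq, of Re] unfolding x_def y_def by simp
  have im: "y * (a + d - 2 * x) = 0"
    using arg_cong[OF eq, of Im] unfolding x_def y_def by (simp add: algebra_simps)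
  have T': "a + d < 0" and D': "a * d - b * c > 0" using T D unfolding a_def b_def c_def d_def by auto
  show ?thesis
  proof (cases "y = 0")
    case True
    with re have "x * x - (a + d) * x + (a * d - b * c) = 0" by (simp add: algebra_simps)
    moreover have "x \<ge> 0 \<Longrightarrow> x * x - (a + d) * x + (a * d - b * c) > 0"
      using T' D' by (smt (verit) mult_nonneg_nonneg mult_nonpos_nonneg)
    ultimately show ?thesis unfolding x_def by linarith
  next
    case False
    with im have "x = (a + d) / 2" by simp
    with T' show ?thesis unfolding x_def by simp
  qed
qed

lemma jac_entries:
  fixes b_x b_y u_x u_y K beta e p q :: real
  assumes "K \<noteq> 0"
  defines "J \<equiv> jac (dXdt b_x b_y u_x u_y K beta e) (dYdt b_x b_y u_x u_y K beta e) p q"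
  shows "J $ 1 $ 1 = b_x * (1 - (p + q) / K) - u_x - beta * q - b_x * p / K - e * q / K"
    "J $ 1 $ 2 = - b_x * p / K - beta * p + e * (1 - (p + q) / K) - e * q / K"
    "J $ 2 $ 1 = (beta - b_y / K) * q"
    "J $ 2 $ 2 = b_y * (1 - (p + q) / K) - u_y + beta * p - b_y * q / K"
proof -
  have "((\<lambda>x. dXdt b_x b_y u_x u_y K beta e x q) has_real_derivative
     (b_x * (1 - (p + q) / K) - u_x - beta * q - b_x * p / K - e * q / K)) (at p)"
    unfolding dXdt_def
    using assms by (auto intro!: derivative_eq_intros simp: field_simps)
  then show "J $ 1 $ 1 = b_x * (1 - (p + q) / K) - u_x - beta * q - b_x * p / K - e * q / K"
    unfolding J_def jac_def by (simp add: DERIV_imp_deriv)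
  have "((\<lambda>y. dXdt b_x b_y u_x u_y K beta e p y) has_real_derivative
     (- b_x * p / K - beta * p + e * (1 - (p + q) / K) - e * q / K)) (at q)"
    unfolding dXdt_def
    using assms by (auto intro!: derivative_eq_intros simp: field_simps)
  then show "J $ 1 $ 2 = - b_x * p / K - beta * p + e * (1 - (p + q) / K) - e * q / K"
    unfolding J_def jac_def by (simp add: DERIV_imp_deriv)
  have "((\<lambda>x. dYdt b_x b_y u_x u_y K beta e x q) has_real_derivative
     ((beta - b_y / K) * q)) (at p)"
    unfolding dYdt_def
    using assms by (auto intro!: derivative_eq_intros simp: field_simps)
  then show "J $ 2 $ 1 = (beta - b_y / K) * q"
    unfolding J_def jac_def by (simp add: DERIV_imp_deriv)
  have "((\<lambda>y. dYdt b_x b_y u_x u_y K beta e p y) has_real_derivative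
     (b_y * (1 - (p + q) / K) - u_y + beta * p - b_y * q / K)) (at q)"
    unfolding dYdt_def
    using assms by (auto intro!: derivative_eq_intros simp: field_simps)
  then show "J $ 2 $ 2 = b_y * (1 - (p + q) / K) - u_y + beta * p - b_y * q / K"
    unfolding J_def jac_def by (simp add: DERIV_imp_deriv)
qed

lemma quad_ident:
  fixes b_x b_y u_x u_y K beta e X :: real
  assumes "K \<noteq> 0" "b_y \<noteq> 0"
  shows "K * dXdt b_x b_y u_x u_y K beta e X ((beta * K - b_y) * X / b_y + K * (b_y - u_y) / b_y)
    = - (coefA b_x b_y u_x u_y K beta e * X\<^sup>2 + coefB b_x b_y u_x u_y K beta e * X + coefC b_x b_y u_x u_y K beta e)"
  using assms unfolding dXdt_def coefA_def coefB_def coefC_def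
  by (simp add: field_simps power2_eq_square)

theorem theorem1:
  fixes b_x b_y u_x u_y K beta e :: real
  assumes pos: "b_x > 0" "b_y > 0" "u_x > 0" "u_y > 0" "K > 0" "beta > 0" "e > 0"
    and huy: "u_y > u_x" and hbx: "b_x \<ge> b_y + e"
  shows "((b_x < u_x \<and> b_y < u_y) \<longrightarrow>
            loc_asym_stable (dXdt b_x b_y u_x u_y K beta e) (dYdt b_x b_y u_x u_y K beta e) 0 0)
       \<and> (b_x > u_x \<longrightarrow>
            ((R0 b_x b_y u_x u_y K beta < 1 \<longrightarrow>
                loc_asym_stable (dXdt b_x b_y u_x u_y K beta e) (dYdt b_x b_y u_x u_y K beta e)
                  (Xbar b_x u_x K) 0)
           \<and> (R0 b_x b_y u_x u_y K beta > 1 \<longrightarrow>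
                unstable (dXdt b_x b_y u_x u_y K beta e) (dYdt b_x b_y u_x u_y K beta e)
                  (Xbar b_x u_x K) 0)))
       \<and> ((b_x > u_x \<and> b_y > u_y \<and> b_y > beta * K \<and>
             K / Xstar b_x b_y u_x u_y K beta e > (b_y - beta * K) / (b_y - u_y))
            \<longrightarrow> loc_asym_stable (dXdt b_x b_y u_x u_y K beta e) (dYdt b_x b_y u_x u_y K beta e)
                  (Xstar b_x b_y u_x u_y K beta e) (Ystar b_x b_y u_x u_y K beta e))"
proof (intro conjI impI)
  let ?F = "dXdt b_x b_y u_x u_y K beta e" and ?G = "dYdt b_x b_y u_x u_y K beta e"
  have K0: "K \<noteq> 0" using pos by simp
  note JE = jac_entries[OF K0, of b_x b_y u_x u_y beta e]
  {
    assume h: "b_x < u_x \<and> b_y < u_y"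
    have eq: "is_equilibrium ?F ?G 0 0" unfolding is_equilibrium_def dXdt_def dYdt_def by simp
    show "loc_asym_stable ?F ?G 0 0"
      unfolding loc_asym_stable_def
    proof (intro conjI allI impI eq)
      fix l assume "eigenvalue2 (jac ?F ?G 0 0) l"
      from eig_tri[OF this] h show "Re l < 0" by (auto simp: JE)
    qed
  }
  {
    assume hb: "b_x > u_x"
    define Xb where "Xb = Xbar b_x u_x K"
    have S: "1 - Xb / K = u_x / b_x" unfolding Xb_def Xbar_def using pos by (simp add: field_simps)
    have S': "1 - (Xb + 0) / K = u_x / b_x" using S by simp
    have eq: "is_equilibrium ?F ?G Xb 0" unfolding is_equilibrium_def dXdt_def dYdt_def
      using S pos by (simp add: field_simps)
    have j11: "jac ?F ?G Xb 0 $ 1 $ 1 = -(b_x - u_x)"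
      unfolding JE S' unfolding Xb_def Xbar_def using pos by (simp add: field_simps)
    have j22: "jac ?F ?G Xb 0 $ 2 $ 2 = u_y * (R0 b_x b_y u_x u_y K beta - 1)"
      unfolding JE S' unfolding Xb_def Xbar_def R0_def V0_def H0_def using pos by (simp add: field_simps)
    have j21: "jac ?F ?G Xb 0 $ 2 $ 1 = 0" unfolding JE by simp
    {
      assume r: "R0 b_x b_y u_x u_y K beta < 1"
      show "loc_asym_stable ?F ?G (Xbar b_x u_x K) 0"
        unfolding loc_asym_stable_def Xb_def[symmetric]
      proof (intro conjI allI impI eq)
        fix l assume "eigenvalue2 (jac ?F ?G Xb 0) l"
        from eig_tri[OF this j21] show "Re l < 0" unfolding j11 j22
          using hb r pos by (auto simp: mult_pos_neg)
      qed
    }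
    {
      assume r: "R0 b_x b_y u_x u_y K beta > 1"
      show "unstable ?F ?G (Xbar b_x u_x K) 0"
        unfolding unstable_def Xb_def[symmetric]
      proof (intro conjI eq exI)
        show "eigenvalue2 (jac ?F ?G Xb 0) (complex_of_real (jac ?F ?G Xb 0 $ 2 $ 2))"
          unfolding eigenvalue2_def using j21 by simp
        show "Re (complex_of_real (jac ?F ?G Xb 0 $ 2 $ 2)) > 0" unfolding j22 using r pos by simp
      qed
    }
  }
  {
    assume h: "b_x > u_x \<and> b_y > u_y \<and> b_y > beta * K \<and>
             K / Xstar b_x b_y u_x u_y K beta e > (b_y - beta * K) / (b_y - u_y)"
    define A where "A = coefA b_x b_y u_x u_y K beta e"
    define B where "B = coefB b_x b_y u_x u_y K beta e"
    define C where "C = coefC b_x b_y u_x u_y K beta e"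
    define X where "X = Xstar b_x b_y u_x u_y K beta e"
    define Y where "Y = Ystar b_x b_y u_x u_y K beta e"
    have Xd: "X = (- B + sqrt (B\<^sup>2 - 4 * A * C)) / (2 * A)"
      unfolding X_def Xstar_def A_def B_def C_def Let_def by simp
    have Apos: "A > 0" unfolding A_def coefA_def using pos hbx
      by (intro mult_pos_pos divide_pos_pos add_nonneg_pos) auto
    have Cneg: "C < 0" unfolding C_def coefC_def using pos h
      by (simp add: divide_pos_pos)
    have AC: "A * C < 0" using Apos Cneg by (simp add: mult_pos_neg)
    define s where "s = sqrt (B\<^sup>2 - 4 * A * C)"
    have "B\<^sup>2 \<ge> 0" by simp
    hence nn: "0 \<le> B\<^sup>2 - 4 * A * C" using AC by linarith
    have s2: "s\<^sup>2 = B\<^sup>2 - 4 * A * C" unfolding s_def by (rule real_sqrt_pow2[OF nn])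
    have s0: "s \<ge> 0" unfolding s_def using nn by simp
    have "s\<^sup>2 > B\<^sup>2" using s2 AC by simp
    hence "s > \<bar>B\<bar>" using s0 by (metis abs_ge_zero abs_of_nonneg power2_abs power_less_imp_less_base)
    hence Xpos: "X > 0" unfolding Xd s_def[symmetric] using Apos by (simp add: divide_pos_pos)
    have quad: "A * X\<^sup>2 + B * X + C = 0"
    proof -
      have "2 * A * X + B = s" unfolding Xd s_def[symmetric] using Apos by (simp add: field_simps)
      hence "(2 * A * X + B)\<^sup>2 = B\<^sup>2 - 4 * A * C" using s2 by simp
      hence "4 * A * (A * X\<^sup>2 + B * X + C) = 0" by (simp add: algebra_simps power2_eq_square)
      thus ?thesis using Apos by simp
    qed
    have Yd: "Y = (beta * K - b_y) * X / b_y + K * (b_y - u_y) / b_y"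
      unfolding Y_def Ystar_def X_def by simp
    have "(b_y - beta * K) / (b_y - u_y) < K / X" using h unfolding X_def by simp
    hence "(b_y - beta * K) * X < K * (b_y - u_y)" using h Xpos
      by (simp add: field_simps)
    hence "(beta * K - b_y) * X + K * (b_y - u_y) > 0" by (simp add: algebra_simps)
    moreover have "Y = ((beta * K - b_y) * X + K * (b_y - u_y)) / b_y" unfolding Yd by (simp add: add_divide_distrib)
    ultimately have Ypos: "Y > 0" using pos by simp
    have F0: "?F X Y = 0"
      using quad_ident[OF K0, of b_y b_x u_x u_y beta e X] quad pos
      unfolding Yd A_def B_def C_def by simp
    define S where "S = 1 - (X + Y) / K"
    have G0': "b_y * S - u_y + beta * X = 0" unfolding S_def Yd using pos by (simp add: field_simps)
    have G0: "?G X Y = 0" unfolding dYdt_def using G0' S_def by simp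
    have F0': "(b_x * S - u_x - beta * Y) * X + e * S * Y = 0" using F0 unfolding dXdt_def S_def .
    have Spos: "S > 0"
    proof (rule ccontr)
      assume "\<not> S > 0"
      hence "b_x * S \<le> 0" using pos by (simp add: mult_nonneg_nonpos)
      moreover have "beta * Y > 0" using pos Ypos by simp
      ultimately have "b_x * S - u_x - beta * Y < 0" using pos by linarith
      hence "(b_x * S - u_x - beta * Y) * X < 0" using Xpos by (simp add: mult_neg_pos)
      moreover have "e * S * Y \<le> 0" using \<open>\<not> S > 0\<close> pos Ypos
        by (simp add: mult_nonpos_nonneg mult_nonneg_nonpos)
      ultimately show False using F0' by simp
    qed
    have P: "b_x * S - u_x - beta * Y = - e * S * Y / X" using F0' Xpos by (simp add: field_simps)
    have a11: "jac ?F ?G X Y $ 1 $ 1 = - e * S * Y / X - b_x * X / K - e * Y / K"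
      unfolding JE S_def[symmetric] using P by simp
    have a12: "jac ?F ?G X Y $ 1 $ 2 = - b_x * X / K - beta * X + e * S - e * Y / K"
      unfolding JE S_def[symmetric] by simp
    have a21: "jac ?F ?G X Y $ 2 $ 1 = (beta - b_y / K) * Y" unfolding JE by simp
    have a22: "jac ?F ?G X Y $ 2 $ 2 = - b_y * Y / K"
      unfolding JE S_def[symmetric] using G0' by simp
    have t1: "e * S * Y / X > 0" using pos Spos Ypos Xpos by simp
    have t2: "b_x * X / K > 0" "e * Y / K > 0" "b_y * Y / K > 0" using pos Ypos Xpos by simp_all
    have tr: "jac ?F ?G X Y $ 1 $ 1 + jac ?F ?G X Y $ 2 $ 2 < 0"
      unfolding a11 a22 using t1 t2 by simp
    have detf: "jac ?F ?G X Y $ 1 $ 1 * jac ?F ?G X Y $ 2 $ 2 - jac ?F ?G X Y $ 1 $ 2 * jac ?F ?G X Y $ 2 $ 1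
      = (Y / K) * (b_y * e * S * Y / X + beta * X * (b_x - b_y + beta * K) + beta * e * Y + (b_y - beta * K) * e * S)"
      unfolding a11 a12 a21 a22 using pos Xpos by (simp add: field_simps)
    have "b_y * e * S * Y / X > 0" using pos Spos Ypos Xpos by simp
    moreover have "b_x - b_y + beta * K > 0" using pos hbx by (simp add: add_pos_pos)
    hence "beta * X * (b_x - b_y + beta * K) > 0" using pos Xpos by simp
    moreover have "beta * e * Y > 0" using pos Ypos by simp
    moreover have "(b_y - beta * K) * e * S > 0" using pos Spos h by simp
    ultimately have sp: "b_y * e * S * Y / X + beta * X * (b_x - b_y + beta * K) + beta * e * Y + (b_y - beta * K) * e * S > 0" by linarith
    have yk: "Y / K > 0" using pos Ypos by simp
    have det: "jac ?F ?G X Y $ 1 $ 1 * jac ?F ?G X Y $ 2 $ 2 - jac ?F ?G X Y $ 1 $ 2 * jac ?F ?G X Y $ 2 $ 1 > 0"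
      unfolding detf by (rule mult_pos_pos[OF yk sp])
    show "loc_asym_stable ?F ?G (Xstar b_x b_y u_x u_y K beta e) (Ystar b_x b_y u_x u_y K beta e)"
      unfolding loc_asym_stable_def X_def[symmetric] Y_def[symmetric] is_equilibrium_def
      using F0 G0 eig_neg[OF _ tr det] by blast
  }
qed

end
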